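(* Let $\Gamma\subset\mathbb{R}^2\cong\mathbb{C}$ be a Jordan $\mathcal{C}^1$-curve and let $T$ be a non-flat triangle in the plane, with vertices $(A,B,C)$. Then there exist a translation $\tau$ and a homothety $\eta$ with positive ratio such that the three vertices $\eta\tau(A),\eta\tau(B),\eta\tau(C)$ all lie on $\Gamma$.
   Context: A Jordan $\mathcal{C}^1$-curve is a connected closed (compact, boundaryless) $\mathcal{C}^1$-submanifold of the plane; equivalently, the image of an injective $\mathcal{C}^1$-immersion of the unit circle $S^1$ into the plane. A triangle (ordered triple of points of the plane) is flat if its vertices are contained in a straight line. *)

theory Defs
  imports "HOL-Analysis.Analysis"
begin

text \<open>A Jordan C1-curve: the image of an injective C1-immersion of the unit circle
 into the plane (identified with the complex numbers).  The circle is parametrised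
 by t \<mapsto> exp(2 pi i t), so such an immersion is the same as a 1-periodic
 C1 map gamma on the reals with nowhere vanishing derivative that is injective on [0,1).\<close>
definition jordan_C1_curve :: "complex set \<Rightarrow> bool" where
  "jordan_C1_curve \<Gamma> \<longleftrightarrow>
     (\<exists>\<gamma> :: real \<Rightarrow> complex.
        \<gamma> C1_differentiable_on UNIV \<and>
        (\<forall>t. vector_derivative \<gamma> (at t) \<noteq> 0) \<and>
        (\<forall>t. \<gamma> (t + 1) = \<gamma> t) \<and>
        inj_on \<gamma> {0..<1} \<and>
        \<Gamma> = \<gamma> ` {0..1})"

definition translation :: "complex \<Rightarrow> complex \<Rightarrow> complex" where
  "translation v z = z + v"

definition homothety :: "complex \<Rightarrow> real \<Rightarrow> complex \<Rightarrow> complex" where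
  "homothety c r z = c + complex_of_real r * (z - c)"

end

theory Submission
  imports Defs
begin


lemma IVT_prod:
  fixes f :: "real \<Rightarrow> real"
  assumes "a \<le> b" "\<forall>x. a \<le> x \<and> x \<le> b \<longrightarrow> isCont f x" "(f a - c) * (f b - c) \<le> 0"
  shows "\<exists>x. a \<le> x \<and> x \<le> b \<and> f x = c"
proof (cases "f a = c")
  case True then show ?thesis using assms(1) by auto
next
  case ne: False
  show ?thesis
  proof (cases "f a < c")
    case True
    then have "c \<le> f b" using assms(3) by (auto simp: mult_le_0_iff)
    then show ?thesis using IVT[of f a c b] True assms by auto
  next
    case False
    then have "f a > c" using ne by auto
    then have "f b \<le> c" using assms(3) by (auto simp: mult_le_0_iff)
    then show ?thesis using IVT2[of f b c a] \<open>f a > c\<close> assms by auto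
  qed
qed

definition clip01 :: "real \<Rightarrow> real" where "clip01 u = max 0 (min 1 u)"

lemma poincare_miranda:
  fixes F1 F2 :: "real \<times> real \<Rightarrow> real"
  assumes c1: "continuous_on (cbox (0,0) (1,1)) F1" and c2: "continuous_on (cbox (0,0) (1,1)) F2"
    and l: "\<And>t. 0 \<le> t \<Longrightarrow> t \<le> 1 \<Longrightarrow> F1 (0,t) \<le> 0"
    and r: "\<And>t. 0 \<le> t \<Longrightarrow> t \<le> 1 \<Longrightarrow> F1 (1,t) \<ge> 0"
    and b: "\<And>s. 0 \<le> s \<Longrightarrow> s \<le> 1 \<Longrightarrow> F2 (s,0) \<le> 0"
    and t: "\<And>s. 0 \<le> s \<Longrightarrow> s \<le> 1 \<Longrightarrow> F2 (s,1) \<ge> 0"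
  shows "\<exists>z\<in>cbox (0,0) (1,1). F1 z = 0 \<and> F2 z = 0"
proof -
  define G where "G z = (clip01 (fst z - F1 z), clip01 (snd z - F2 z))" for z
  have box: "cbox (0::real,0::real) (1,1) = {z. 0 \<le> fst z \<and> fst z \<le> 1 \<and> 0 \<le> snd z \<and> snd z \<le> 1}"
    by (auto simp: cbox_Pair_eq)
  have cc: "continuous_on UNIV clip01"
    unfolding clip01_def by (intro continuous_intros)
  have "continuous_on (cbox (0,0) (1,1)) G"
    unfolding G_def
    apply (intro continuous_on_Pair)
     apply (rule continuous_on_compose2[OF cc]) apply (intro continuous_intros c1) apply simp
    apply (rule continuous_on_compose2[OF cc]) apply (intro continuous_intros c2) apply simp
    done
  moreover have "G \<in> cbox (0,0) (1,1) \<rightarrow> cbox (0,0) (1,1)"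
    unfolding box G_def clip01_def by auto
  moreover have "cbox (0::real,0::real) (1,1) \<noteq> {}" proof - have "(0,0) \<in> cbox (0::real,0::real) (1,1)" unfolding box by auto then show ?thesis by blast qed
  ultimately obtain z where z: "z \<in> cbox (0,0) (1,1)" "G z = z"
    using brouwer[of "cbox (0::real,0::real) (1,1)" G] compact_cbox convex_box(1) by blast
  obtain s t where st: "z = (s,t)" by fastforce
  have s: "0 \<le> s" "s \<le> 1" "0 \<le> t" "t \<le> 1" using z(1) st box by auto
  have e1: "clip01 (s - F1 (s,t)) = s" and e2: "clip01 (t - F2 (s,t)) = t"
    using z(2) st unfolding G_def by auto
  have "F1 (s,t) = 0"
  proof (rule ccontr)
    assume ne: "F1 (s,t) \<noteq> 0"
    show False
    proof (cases "F1 (s,t) > 0")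
      case True
      then have "s = 0" using e1 s unfolding clip01_def by (auto simp: max_def min_def split: if_splits)
      then show False using l[of t] s True by auto
    next
      case False
      then have "F1 (s,t) < 0" using ne by auto
      then have "s = 1" using e1 s unfolding clip01_def by (auto simp: max_def min_def split: if_splits)
      then show False using r[of t] s \<open>F1 (s,t) < 0\<close> by auto
    qed
  qed
  moreover have "F2 (s,t) = 0"
  proof (rule ccontr)
    assume ne: "F2 (s,t) \<noteq> 0"
    show False
    proof (cases "F2 (s,t) > 0")
      case True
      then have "t = 0" using e2 s unfolding clip01_def by (auto simp: max_def min_def split: if_splits)
      then show False using b[of s] s True by auto
    next
      case False
      then have "F2 (s,t) < 0" using ne by auto
      then have "t = 1" using e2 s unfolding clip01_def by (auto simp: max_def min_def split: if_splits)
      then show False using t[of s] s \<open>F2 (s,t) < 0\<close> by auto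
    qed
  qed
  ultimately show ?thesis using z(1) st by auto
qed




lemma cont_delta:
  fixes f :: "real \<Rightarrow> complex"
  assumes "isCont f x" "e > 0"
  shows "\<exists>d>0. \<forall>y. \<bar>y - x\<bar> < d \<longrightarrow> cmod (f y - f x) < e"
  using assms continuous_at_eps_delta[of x f] by (auto simp: dist_norm dist_real_def)

definition apex :: "complex \<Rightarrow> complex \<Rightarrow> complex" where
  "apex w1 w2 = (w1 + w2) / 2 + \<i> * complex_of_real (\<bar>Re w1 - Re w2\<bar> / 2)"

locale jcurve =
  fixes g :: "real \<Rightarrow> complex" and g' :: "real \<Rightarrow> complex"
  assumes deriv: "\<And>t. (g has_vector_derivative g' t) (at t)"
    and contd: "continuous_on UNIV g'"
    and nz: "\<And>t. g' t \<noteq> 0"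
    and per: "\<And>t. g (t + 1) = g t"
    and inj: "inj_on g {0..<1}"
begin

lemma isCont_g: "isCont g t"
  using deriv has_vector_derivative_continuous by blast

lemma cont_g: "continuous_on S g"
  by (simp add: continuous_at_imp_continuous_on isCont_g)

lemma isCont_g': "isCont g' t"
  using contd by (simp add: continuous_on_eq_continuous_at)

lemma dRe: "DERIV (\<lambda>t. Re (g t)) t :> Re (g' t)"
  using has_field_derivative_Re[OF deriv] .

lemma dIm: "DERIV (\<lambda>t. Im (g t)) t :> Im (g' t)"
  using has_field_derivative_Im[OF deriv] .

lemma per_nat: "g (t + real n) = g t"
proof (induction n arbitrary: t)
  case 0 then show ?case by simp
next
  case (Suc n)
  have "g (t + real (Suc n)) = g ((t + real n) + 1)" by (simp add: algebra_simps)
  also have "\<dots> = g t" using per Suc by simp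
  finally show ?case .
qed

lemma per_int: "g (t + real_of_int k) = g t"
proof (cases "k \<ge> 0")
  case True
  then obtain n where "k = int n" by (metis nonneg_eq_int)
  then show ?thesis using per_nat by simp
next
  case False
  then obtain n where n: "k = - int n" by (metis add.inverse_inverse le_cases neg_0_le_iff_le nonneg_eq_int)
  have "g t = g ((t - real n) + real n)" by simp
  also have "\<dots> = g (t - real n)" by (rule per_nat)
  finally show ?thesis using n by simp
qed

lemma shift_rep: "\<exists>t'. a \<le> t' \<and> t' < a + 1 \<and> g t' = g t"
proof -
  define k where "k = \<lfloor>t - a\<rfloor>"
  have "g (t + real_of_int (-k)) = g t" by (rule per_int)
  moreover have "a \<le> t - k" "t - k < a + 1" unfolding k_def
    using of_int_floor_le[of "t-a"] real_of_int_floor_add_one_gt[of "t-a"] by linarith+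
  ultimately show ?thesis by (intro exI[of _ "t - k"]) auto
qed

lemma inj_shift: "inj_on g {a..<a+1}"
proof (rule inj_onI)
  fix t1 t2 assume t1: "t1 \<in> {a..<a+1}" and t2: "t2 \<in> {a..<a+1}" and e: "g t1 = g t2"
  define f1 where "f1 = t1 - \<lfloor>t1\<rfloor>"
  define f2 where "f2 = t2 - \<lfloor>t2\<rfloor>"
  have "g f1 = g t1" unfolding f1_def using per_int[of t1 "-\<lfloor>t1\<rfloor>"] by simp
  moreover have "g f2 = g t2" unfolding f2_def using per_int[of t2 "-\<lfloor>t2\<rfloor>"] by simp
  moreover have "f1 \<in> {0..<1}" "f2 \<in> {0..<1}" unfolding f1_def f2_def
    using of_int_floor_le[of t1] real_of_int_floor_add_one_gt[of t1]
      of_int_floor_le[of t2] real_of_int_floor_add_one_gt[of t2] by (auto simp: algebra_simps)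
  ultimately have "f1 = f2" using inj e by (metis inj_onD)
  then have d: "t1 - t2 = real_of_int (\<lfloor>t1\<rfloor> - \<lfloor>t2\<rfloor>)" unfolding f1_def f2_def by simp
  have "\<bar>t1 - t2\<bar> < 1" using t1 t2 by auto
  then have "\<bar>\<lfloor>t1\<rfloor> - \<lfloor>t2\<rfloor>\<bar> < 1" using d by (metis of_int_abs of_int_less_1_iff)
  then have "\<lfloor>t1\<rfloor> - \<lfloor>t2\<rfloor> = 0" by linarith
  then show "t1 = t2" using d by simp
qed

lemma range_eq: "g ` {a..a+1} = range g"
proof
  show "range g \<subseteq> g ` {a..a+1}"
  proof
    fix z assume "z \<in> range g"
    then obtain t where "z = g t" by auto
    then obtain t' where "a \<le> t'" "t' < a+1" "g t' = z" using shift_rep[of a t] by auto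
    then show "z \<in> g ` {a..a+1}" by force
  qed
qed auto

lemma simple: "simple_path g"
  unfolding simple_path_def loop_free_def path_def
proof (intro conjI cont_g ballI impI)
  fix x y assume x: "x \<in> {0..1::real}" and y: "y \<in> {0..1::real}" and e: "g x = g y"
  have g1: "g 1 = g 0" using per[of 0] by simp
  show "x = y \<or> x = 0 \<and> y = 1 \<or> x = 1 \<and> y = 0"
  proof (cases "x = 1")
    case True
    show ?thesis
    proof (cases "y = 1")
      case False
      then have "y \<in> {0..<1}" using y by auto
      then have "y = 0" using inj e True g1 by (metis atLeastLessThan_iff inj_onD order_refl zero_less_one)
      then show ?thesis using True by simp
    qed (use True in simp)
  next
    case False
    then have x': "x \<in> {0..<1}" using x by auto
    show ?thesis
    proof (cases "y = 1")
      case True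
      then have "x = 0" using inj e x' g1 by (metis atLeastLessThan_iff inj_onD order_refl zero_less_one)
      then show ?thesis using True by simp
    next
      case False
      then have "y \<in> {0..<1}" using y by auto
      then show ?thesis using inj e x' by (metis inj_onD)
    qed
  qed
qed

lemma path_image_g: "path_image g = range g"
  unfolding path_image_def using range_eq[of 0] by simp

lemma loop: "pathfinish g = pathstart g"
  unfolding pathfinish_def pathstart_def using per[of 0] by simp

end



lemma apex_sym: "apex w1 w2 = apex w2 w1"
  unfolding apex_def by (simp add: abs_minus_commute add.commute)

context jcurve begin

lemma isCont_Re: "isCont (\<lambda>t. Re (g t)) z" using DERIV_isCont[OF dRe] .
lemma isCont_Im: "isCont (\<lambda>t. Im (g t)) z" using DERIV_isCont[OF dIm] .

lemma mvt_Re: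
  assumes "a < b"
  shows "\<exists>c. a < c \<and> c < b \<and> Re (g b) - Re (g a) = (b - a) * Re (g' c)"
proof -
  have "\<exists>c. a < c \<and> c < b \<and> (Re (g b) - Re (g a)) * 1 = (b - a) * Re (g' c)"
    using assms by (intro GMVT'[where g="\<lambda>t. t" and g'="\<lambda>_. 1"]) (auto intro!: isCont_Re dRe derivative_eq_intros)
  then show ?thesis by simp
qed

lemma cmvt:
  assumes "a < b"
  shows "\<exists>c. a < c \<and> c < b \<and> (Re (g b) - Re (g a)) * Im (g' c) = (Im (g b) - Im (g a)) * Re (g' c)"
  using assms by (intro GMVT') (auto intro!: isCont_Re isCont_Im dRe dIm)

end



lemma abs_half: "\<bar>(a::real) - s\<bar> < e/2 \<Longrightarrow> \<bar>b - s\<bar> < e/2 \<Longrightarrow> \<bar>a - b\<bar>/2 < e/2"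
  unfolding abs_less_iff by auto


context jcurve begin

lemma local_struct:
  assumes y0: "Im (g' \<sigma>) = 0"
  obtains \<delta> \<eta> \<kappa> where "\<delta> > 0" "\<eta> > 0" "\<kappa> > 0"
   "\<And>\<tau> v. \<bar>\<tau> - \<sigma>\<bar> < \<delta> \<Longrightarrow> 0 < v \<Longrightarrow> v < \<eta> \<Longrightarrow> g \<tau> + \<i> * complex_of_real v \<notin> range g"
   "\<And>\<tau> v. \<bar>\<tau> - \<sigma>\<bar> < \<delta> \<Longrightarrow> 0 < v \<Longrightarrow> v < \<eta> \<Longrightarrow> g \<tau> - \<i> * complex_of_real v \<notin> range g"
   "\<And>z. cmod (z - g \<sigma>) < \<kappa> \<Longrightarrow> z \<in> range g \<or> (\<exists>\<tau> v. \<bar>\<tau> - \<sigma>\<bar> < \<delta> \<and> 0 < v \<and> v < \<eta> \<and>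
          (z = g \<tau> + \<i> * complex_of_real v \<or> z = g \<tau> - \<i> * complex_of_real v))"
   "\<And>\<tau>1 \<tau>2. \<bar>\<tau>1 - \<sigma>\<bar> < \<delta> \<Longrightarrow> \<bar>\<tau>2 - \<sigma>\<bar> < \<delta> \<Longrightarrow> Im (g \<tau>1) = Im (g \<tau>2) \<Longrightarrow> g \<tau>1 \<noteq> g \<tau>2 \<Longrightarrow>
       \<exists>\<tau> v. \<bar>\<tau> - \<sigma>\<bar> < \<delta> \<and> 0 < v \<and> v < \<eta> \<and> apex (g \<tau>1) (g \<tau>2) = g \<tau> + \<i> * complex_of_real v"
proof -
  define c where "c = \<bar>Re (g' \<sigma>)\<bar>"
  have c: "c > 0" using nz[of \<sigma>] y0 unfolding c_def by (auto simp: complex_eq_iff)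
  have csq: "Re (g' \<sigma>) * Re (g' \<sigma>) = c * c" unfolding c_def by (simp add: abs_mult_self_eq)
  obtain \<delta>0 where \<delta>0: "\<delta>0 > 0" "\<And>t. \<bar>t - \<sigma>\<bar> < \<delta>0 \<Longrightarrow> cmod (g' t - g' \<sigma>) < c/2"
    using cont_delta[OF isCont_g', of "c/2" \<sigma>] c by auto
  have Dy: "\<bar>Im (g' t)\<bar> < c/2" if "\<bar>t - \<sigma>\<bar> < \<delta>0" for t
    using abs_Im_le_cmod[of "g' t - g' \<sigma>"] \<delta>0(2)[OF that] y0 by simp
  have Dre: "\<bar>Re (g' t) - Re (g' \<sigma>)\<bar> < c/2" if "\<bar>t - \<sigma>\<bar> < \<delta>0" for t
    using abs_Re_le_cmod[of "g' t - g' \<sigma>"] \<delta>0(2)[OF that] by simp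
  have Dx: "Re (g' t) * Re (g' \<sigma>) > c*c/2" if "\<bar>t - \<sigma>\<bar> < \<delta>0" for t
  proof -
    have "\<bar>(Re (g' t) - Re (g' \<sigma>)) * Re (g' \<sigma>)\<bar> \<le> c/2 * c"
      unfolding abs_mult using Dre[OF that] c unfolding c_def
      by (intro mult_right_mono) auto
    moreover have "\<bar>(Re (g' t) - Re (g' \<sigma>)) * Re (g' \<sigma>)\<bar> < c/2 * c"
      unfolding abs_mult using Dre[OF that] c unfolding c_def
      by (intro mult_strict_right_mono) auto
    moreover have "(Re (g' t) - Re (g' \<sigma>)) * Re (g' \<sigma>) = Re (g' t) * Re (g' \<sigma>) - c*c"
      using csq by (simp add: algebra_simps)
    ultimately have "\<bar>Re (g' t) * Re (g' \<sigma>) - c * c\<bar> < c*c/2" by simp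
    then show ?thesis by (simp only: abs_less_iff) linarith
  qed
  have Dxabs: "\<bar>Re (g' t)\<bar> > c/2" if "\<bar>t - \<sigma>\<bar> < \<delta>0" for t
    using Dre[OF that] unfolding c_def by linarith
  have xinj: "t1 = t2" if "\<bar>t1 - \<sigma>\<bar> < \<delta>0" "\<bar>t2 - \<sigma>\<bar> < \<delta>0" "Re (g t1) = Re (g t2)" for t1 t2
  proof (rule ccontr)
    assume ne: "t1 \<noteq> t2"
    have main: False if ab: "a < b" "\<bar>a - \<sigma>\<bar> < \<delta>0" "\<bar>b - \<sigma>\<bar> < \<delta>0" "Re (g a) = Re (g b)" for a b
    proof -
      obtain cc where cc: "a < cc" "cc < b" "Re (g b) - Re (g a) = (b - a) * Re (g' cc)"
        using mvt_Re[OF ab(1)] by auto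
      have "\<bar>cc - \<sigma>\<bar> < \<delta>0" using cc ab by auto
      then have "Re (g' cc) \<noteq> 0" using Dxabs c by fastforce
      then show False using cc ab by auto
    qed
    show False
      using ne that main[of t1 t2] main[of t2 t1] by (cases "t1 < t2") auto
  qed
  define d where "d = min \<delta>0 (1/4)"
  have d: "d > 0" "d \<le> \<delta>0" "d \<le> 1/4" using \<delta>0 unfolding d_def by auto
  define K where "K = g ` ({\<sigma> - 1/2..\<sigma> - d} \<union> {\<sigma> + d..\<sigma> + 1/2})"
  have cK: "compact K" unfolding K_def
    by (intro compact_continuous_image cont_g compact_Un compact_Icc)
  have neK: "K \<noteq> {}" unfolding K_def using d by auto
  have nK: "g \<sigma> \<notin> K"
  proof
    assume "g \<sigma> \<in> K"
    then obtain t where t: "t \<in> {\<sigma> - 1/2..\<sigma> - d} \<union> {\<sigma> + d..\<sigma> + 1/2}" "g t = g \<sigma>"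
      unfolding K_def by (metis imageE)
    have inj2: "inj_on g {\<sigma> - 1/2..<\<sigma> - 1/2 + 1}" by (rule inj_shift)
    show False
    proof (cases "t = \<sigma> + 1/2")
      case True
      have "g (\<sigma> - 1/2) = g \<sigma>" using t(2) True per[of "\<sigma> - 1/2"] by (simp add: add.commute)
      then have "\<sigma> - 1/2 = \<sigma>" using inj_onD[OF inj2] by auto
      then show False by simp
    next
      case False
      then have "t \<in> {\<sigma> - 1/2..<\<sigma> - 1/2 + 1}" using t d by auto
      then have "t = \<sigma>" using inj_onD[OF inj2 t(2)] d by auto
      then show False using t d by auto
    qed
  qed
  define \<rho> where "\<rho> = infdist (g \<sigma>) K"
  have \<rho>: "\<rho> > 0" unfolding \<rho>_def using infdist_pos_not_in_closed[OF compact_imp_closed[OF cK] neK nK] .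
  have near: "\<exists>\<tau>. \<bar>\<tau> - \<sigma>\<bar> < d \<and> w = g \<tau>" if wr: "w \<in> range g" "cmod (w - g \<sigma>) < \<rho>" for w
  proof -
    obtain t where t: "t \<in> {\<sigma> - 1/2..\<sigma> - 1/2 + 1}" "w = g t" using wr(1) range_eq[of "\<sigma> - 1/2"] by (metis imageE)
    show ?thesis
    proof (cases "\<bar>t - \<sigma>\<bar> < d")
      case False
      then have "w \<in> K" unfolding K_def using t by auto
      then have "\<rho> \<le> dist (g \<sigma>) w" unfolding \<rho>_def by (rule infdist_le)
      then show ?thesis using wr(2) t(2) by (simp add: dist_norm norm_minus_commute)
    qed (use t in auto)
  qed
  define \<eta> where "\<eta> = \<rho> / 4"
  have \<eta>: "\<eta> > 0" unfolding \<eta>_def using \<rho> by auto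
  obtain \<delta>1 where \<delta>1: "\<delta>1 > 0" "\<And>t. \<bar>t - \<sigma>\<bar> < \<delta>1 \<Longrightarrow> cmod (g t - g \<sigma>) < \<eta>/2"
    using cont_delta[OF isCont_g, of "\<eta>/2" \<sigma>] \<eta> by auto
  define \<delta> where "\<delta> = min \<delta>1 d"
  have \<delta>: "\<delta> > 0" "\<delta> \<le> \<delta>1" "\<delta> \<le> d" using \<delta>1 d unfolding \<delta>_def by auto
  have A: "g \<tau> + \<i> * complex_of_real v \<notin> range g" if "\<bar>\<tau> - \<sigma>\<bar> < \<delta>" "0 < v" "v < \<eta>" for \<tau> v
  proof
    assume m: "g \<tau> + \<i> * complex_of_real v \<in> range g"
    have "cmod (g \<tau> + \<i> * complex_of_real v - g \<sigma>) \<le> cmod (g \<tau> - g \<sigma>) + cmod (\<i> * complex_of_real v)"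
      using norm_triangle_ineq[of "g \<tau> - g \<sigma>" "\<i> * complex_of_real v"] by (simp add: algebra_simps)
    also have "\<dots> < \<eta>/2 + \<eta>" using \<delta>1(2)[of \<tau>] that \<delta> by (simp add: norm_mult)
    also have "\<dots> < \<rho>" unfolding \<eta>_def using \<rho> by simp
    finally obtain \<tau>' where \<tau>': "\<bar>\<tau>' - \<sigma>\<bar> < d" "g \<tau> + \<i> * complex_of_real v = g \<tau>'" using near[OF m] by auto
    have "Re (g \<tau>') = Re (g \<tau>)" using arg_cong[OF \<tau>'(2), of Re] by simp
    then have "\<tau>' = \<tau>" using xinj[of \<tau>' \<tau>] \<tau>' that \<delta> d by auto
    then show False using \<tau>'(2) that(2) by simp
  qed
  have B: "g \<tau> - \<i> * complex_of_real v \<notin> range g" if "\<bar>\<tau> - \<sigma>\<bar> < \<delta>" "0 < v" "v < \<eta>" for \<tau> v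
  proof
    assume m: "g \<tau> - \<i> * complex_of_real v \<in> range g"
    have "cmod (g \<tau> - \<i> * complex_of_real v - g \<sigma>) \<le> cmod (g \<tau> - g \<sigma>) + cmod (\<i> * complex_of_real v)"
      using norm_triangle_ineq4[of "g \<tau> - g \<sigma>" "\<i> * complex_of_real v"] by (simp add: algebra_simps)
    also have "\<dots> < \<eta>/2 + \<eta>" using \<delta>1(2)[of \<tau>] that \<delta> by (simp add: norm_mult)
    also have "\<dots> < \<rho>" unfolding \<eta>_def using \<rho> by simp
    finally obtain \<tau>' where \<tau>': "\<bar>\<tau>' - \<sigma>\<bar> < d" "g \<tau> - \<i> * complex_of_real v = g \<tau>'" using near[OF m] by auto
    have "Re (g \<tau>') = Re (g \<tau>)" using arg_cong[OF \<tau>'(2), of Re] by simp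
    then have "\<tau>' = \<tau>" using xinj[of \<tau>' \<tau>] \<tau>' that \<delta> d by auto
    then show False using \<tau>'(2) that(2) by simp
  qed
  define \<kappa> where "\<kappa> = min (\<delta> * c / 4) (\<eta>/2)"
  have \<kappa>: "\<kappa> > 0" unfolding \<kappa>_def using \<delta> c \<eta> by auto
  have right: "(Re (g (\<sigma> + \<delta>/2)) - Re (g \<sigma>)) * Re (g' \<sigma>) > \<delta> * c * c / 4"
  proof -
    obtain \<xi> where \<xi>: "\<sigma> < \<xi>" "\<xi> < \<sigma> + \<delta>/2" "Re (g (\<sigma> + \<delta>/2)) - Re (g \<sigma>) = (\<sigma> + \<delta>/2 - \<sigma>) * Re (g' \<xi>)"
      using mvt_Re[of \<sigma> "\<sigma> + \<delta>/2"] \<delta> by auto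
    have "\<bar>\<xi> - \<sigma>\<bar> < \<delta>0" using \<xi> \<delta> d by auto
    then have "Re (g' \<xi>) * Re (g' \<sigma>) > c*c/2" by (rule Dx)
    then have "\<delta>/2 * (Re (g' \<xi>) * Re (g' \<sigma>)) > \<delta>/2 * (c*c/2)" using \<delta> by (intro mult_strict_left_mono) auto
    moreover have "(Re (g (\<sigma> + \<delta>/2)) - Re (g \<sigma>)) * Re (g' \<sigma>) = \<delta>/2 * (Re (g' \<xi>) * Re (g' \<sigma>))"
      unfolding \<xi>(3) by (simp add: algebra_simps)
    ultimately show ?thesis by linarith
  qed
  have left: "(Re (g \<sigma>) - Re (g (\<sigma> - \<delta>/2))) * Re (g' \<sigma>) > \<delta> * c * c / 4"
  proof -
    obtain \<xi> where \<xi>: "\<sigma> - \<delta>/2 < \<xi>" "\<xi> < \<sigma>" "Re (g \<sigma>) - Re (g (\<sigma> - \<delta>/2)) = (\<sigma> - (\<sigma> - \<delta>/2)) * Re (g' \<xi>)"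
      using mvt_Re[of "\<sigma> - \<delta>/2" \<sigma>] \<delta> by auto
    have "\<bar>\<xi> - \<sigma>\<bar> < \<delta>0" using \<xi> \<delta> d by auto
    then have "Re (g' \<xi>) * Re (g' \<sigma>) > c*c/2" by (rule Dx)
    then have "\<delta>/2 * (Re (g' \<xi>) * Re (g' \<sigma>)) > \<delta>/2 * (c*c/2)" using \<delta> by (intro mult_strict_left_mono) auto
    moreover have "(Re (g \<sigma>) - Re (g (\<sigma> - \<delta>/2))) * Re (g' \<sigma>) = \<delta>/2 * (Re (g' \<xi>) * Re (g' \<sigma>))"
      unfolding \<xi>(3) by (simp add: algebra_simps)
    ultimately show ?thesis by linarith
  qed
  have C: "z \<in> range g \<or> (\<exists>\<tau> v. \<bar>\<tau> - \<sigma>\<bar> < \<delta> \<and> 0 < v \<and> v < \<eta> \<and>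
          (z = g \<tau> + \<i> * complex_of_real v \<or> z = g \<tau> - \<i> * complex_of_real v))"
    if zk: "cmod (z - g \<sigma>) < \<kappa>" for z
  proof -
    have re: "\<bar>Re z - Re (g \<sigma>)\<bar> < \<delta> * c / 4"
      using abs_Re_le_cmod[of "z - g \<sigma>"] zk unfolding \<kappa>_def by auto
    have im: "\<bar>Im z - Im (g \<sigma>)\<bar> < \<eta>/2"
      using abs_Im_le_cmod[of "z - g \<sigma>"] zk unfolding \<kappa>_def by auto
    have "\<bar>(Re z - Re (g \<sigma>)) * Re (g' \<sigma>)\<bar> \<le> \<delta> * c / 4 * c"
      unfolding abs_mult c_def[symmetric] using re c by (intro mult_right_mono) auto
    moreover have "\<delta> * c / 4 * c = \<delta> * c * c / 4" by simp
    moreover have "(Re (g (\<sigma> - \<delta>/2)) - Re z) * Re (g' \<sigma>) = (Re z - Re (g \<sigma>)) * Re (g' \<sigma>) * (-1) - (Re (g \<sigma>) - Re (g (\<sigma> - \<delta>/2))) * Re (g' \<sigma>)"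
       "(Re (g (\<sigma> + \<delta>/2)) - Re z) * Re (g' \<sigma>) = (Re (g (\<sigma> + \<delta>/2)) - Re (g \<sigma>)) * Re (g' \<sigma>) - (Re z - Re (g \<sigma>)) * Re (g' \<sigma>)"
      by (simp_all add: algebra_simps)
    ultimately have "(Re (g (\<sigma> - \<delta>/2)) - Re z) * Re (g' \<sigma>) < 0" "(Re (g (\<sigma> + \<delta>/2)) - Re z) * Re (g' \<sigma>) > 0"
      using left right \<open>\<delta> * c / 4 * c = \<delta> * c * c / 4\<close> by (simp_all only: abs_le_iff) linarith+
    then have "((Re (g (\<sigma> - \<delta>/2)) - Re z) * Re (g' \<sigma>)) * ((Re (g (\<sigma> + \<delta>/2)) - Re z) * Re (g' \<sigma>)) < 0"
      by (simp add: mult_neg_pos)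
    then have "((Re (g (\<sigma> - \<delta>/2)) - Re z) * (Re (g (\<sigma> + \<delta>/2)) - Re z)) * (Re (g' \<sigma>) * Re (g' \<sigma>)) < 0"
      by (simp add: algebra_simps)
    then have "(Re (g (\<sigma> - \<delta>/2)) - Re z) * (Re (g (\<sigma> + \<delta>/2)) - Re z) \<le> 0"
      using c csq by (smt (verit) mult_nonneg_nonneg mult_pos_pos)
    then obtain \<tau> where \<tau>: "\<sigma> - \<delta>/2 \<le> \<tau>" "\<tau> \<le> \<sigma> + \<delta>/2" "Re (g \<tau>) = Re z"
      using IVT_prod[of "\<sigma> - \<delta>/2" "\<sigma> + \<delta>/2" "\<lambda>t. Re (g t)" "Re z"] \<delta> isCont_Re by auto
    have t\<delta>: "\<bar>\<tau> - \<sigma>\<bar> < \<delta>" using \<tau> \<delta> by auto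
    have "cmod (g \<tau> - g \<sigma>) < \<eta>/2" using \<delta>1(2)[of \<tau>] t\<delta> \<delta> by auto
    then have "\<bar>Im (g \<tau>) - Im (g \<sigma>)\<bar> < \<eta>/2" using abs_Im_le_cmod[of "g \<tau> - g \<sigma>"] by auto
    define v0 where "v0 = Im z - Im (g \<tau>)"
    have v0: "\<bar>v0\<bar> < \<eta>" unfolding v0_def using im \<open>\<bar>Im (g \<tau>) - Im (g \<sigma>)\<bar> < \<eta>/2\<close> by linarith
    have zeq: "z = g \<tau> + \<i> * complex_of_real v0" using \<tau>(3) unfolding v0_def by (simp add: complex_eq_iff)
    show ?thesis
    proof (cases "v0 = 0")
      case True then show ?thesis using zeq by auto
    next
      case False
      show ?thesis
      proof (cases "v0 > 0")
        case True
        then show ?thesis using zeq v0 t\<delta> by auto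
      next
        case False
        then have "z = g \<tau> - \<i> * complex_of_real (-v0)" "0 < -v0" "-v0 < \<eta>"
          using zeq v0 \<open>v0 \<noteq> 0\<close> by auto
        then show ?thesis using t\<delta> by blast
      qed
    qed
  qed
  have Dlt: "\<exists>\<tau> v. \<bar>\<tau> - \<sigma>\<bar> < \<delta> \<and> 0 < v \<and> v < \<eta> \<and> apex (g \<tau>1) (g \<tau>2) = g \<tau> + \<i> * complex_of_real v"
    if h: "\<tau>1 < \<tau>2" "\<bar>\<tau>1 - \<sigma>\<bar> < \<delta>" "\<bar>\<tau>2 - \<sigma>\<bar> < \<delta>" "Im (g \<tau>1) = Im (g \<tau>2)" "g \<tau>1 \<noteq> g \<tau>2" for \<tau>1 \<tau>2
  proof -
    have rne: "Re (g \<tau>1) \<noteq> Re (g \<tau>2)" using h(4,5) by (auto simp: complex_eq_iff)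
    define m where "m = (Re (g \<tau>1) + Re (g \<tau>2)) / 2"
    define r where "r = \<bar>Re (g \<tau>1) - Re (g \<tau>2)\<bar> / 2"
    have r: "r > 0" unfolding r_def using rne by auto
    have "(Re (g \<tau>1) - m) * (Re (g \<tau>2) - m) \<le> 0"
    proof -
      have "(Re (g \<tau>1) - m) * (Re (g \<tau>2) - m) = - ((Re (g \<tau>1) - Re (g \<tau>2))^2 / 4)"
        unfolding m_def by (simp add: field_simps power2_eq_square)
      then show ?thesis by simp
    qed
    then obtain \<tau> where \<tau>: "\<tau>1 \<le> \<tau>" "\<tau> \<le> \<tau>2" "Re (g \<tau>) = m"
      using IVT_prod[of \<tau>1 \<tau>2 "\<lambda>t. Re (g t)" m] h(1) isCont_Re by auto
    have t\<delta>: "\<bar>\<tau> - \<sigma>\<bar> < \<delta>" using \<tau> h by auto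
    have "\<tau>1 \<noteq> \<tau>" using \<tau>(3) rne unfolding m_def by auto
    then have lt: "\<tau>1 < \<tau>" using \<tau> by auto
    obtain \<xi> where \<xi>: "\<tau>1 < \<xi>" "\<xi> < \<tau>" "(Re (g \<tau>) - Re (g \<tau>1)) * Im (g' \<xi>) = (Im (g \<tau>) - Im (g \<tau>1)) * Re (g' \<xi>)"
      using cmvt[OF lt] by auto
    have x\<delta>: "\<bar>\<xi> - \<sigma>\<bar> < \<delta>0" using \<xi> \<tau> h \<delta> d by auto
    have dre: "\<bar>Re (g \<tau>) - Re (g \<tau>1)\<bar> = r" using \<tau>(3) unfolding m_def r_def by (simp add: abs_if)
    have "\<bar>Im (g \<tau>) - Im (g \<tau>1)\<bar> * \<bar>Re (g' \<xi>)\<bar> = r * \<bar>Im (g' \<xi>)\<bar>"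
      using arg_cong[OF \<xi>(3), of abs] dre by (simp add: abs_mult)
    also have "\<dots> < r * \<bar>Re (g' \<xi>)\<bar>" using Dy[OF x\<delta>] Dxabs[OF x\<delta>] r by (intro mult_strict_left_mono) auto
    finally have ilt: "\<bar>Im (g \<tau>) - Im (g \<tau>1)\<bar> < r" using Dxabs[OF x\<delta>] c
      by (metis mult_less_cancel_right abs_ge_zero not_less order.strict_trans2 less_eq_real_def)
    have "cmod (g \<tau>1 - g \<sigma>) < \<eta>/2" "cmod (g \<tau>2 - g \<sigma>) < \<eta>/2" using \<delta>1(2) h \<delta> by auto
    then have "\<bar>Re (g \<tau>1) - Re (g \<sigma>)\<bar> < \<eta>/2" "\<bar>Re (g \<tau>2) - Re (g \<sigma>)\<bar> < \<eta>/2"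
      using abs_Re_le_cmod[of "g \<tau>1 - g \<sigma>"] abs_Re_le_cmod[of "g \<tau>2 - g \<sigma>"] by auto
    then have r\<eta>: "r < \<eta>/2" unfolding r_def by (rule abs_half)
    define v where "v = Im (g \<tau>1) + r - Im (g \<tau>)"
    have v: "0 < v" "v < \<eta>" unfolding v_def using ilt r\<eta> by linarith+
    have "apex (g \<tau>1) (g \<tau>2) = g \<tau> + \<i> * complex_of_real v"
      unfolding apex_def v_def using \<tau>(3) h(4) unfolding m_def r_def by (simp add: complex_eq_iff)
    then show ?thesis using t\<delta> v by blast
  qed
  have D: "\<exists>\<tau> v. \<bar>\<tau> - \<sigma>\<bar> < \<delta> \<and> 0 < v \<and> v < \<eta> \<and> apex (g \<tau>1) (g \<tau>2) = g \<tau> + \<i> * complex_of_real v"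
    if h: "\<bar>\<tau>1 - \<sigma>\<bar> < \<delta>" "\<bar>\<tau>2 - \<sigma>\<bar> < \<delta>" "Im (g \<tau>1) = Im (g \<tau>2)" "g \<tau>1 \<noteq> g \<tau>2" for \<tau>1 \<tau>2
  proof (cases "\<tau>1 < \<tau>2")
    case True then show ?thesis using Dlt h by blast
  next
    case False
    then have "\<tau>2 < \<tau>1" using h(4) by (cases "\<tau>1 = \<tau>2") auto
    then show ?thesis using Dlt[of \<tau>2 \<tau>1] h apex_sym by metis
  qed
  show ?thesis using that[OF \<delta>(1) \<eta> \<kappa> A B C D] .
qed

end



context jcurve begin

definition jsets :: "complex set \<Rightarrow> complex set \<Rightarrow> bool" where
  "jsets I E \<longleftrightarrow> open I \<and> open E \<and> bounded I \<and> \<not> bounded E \<and> I \<inter> E = {} \<and>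
     I \<union> E = - range g \<and> frontier I = range g"

lemma jordan_ex: "\<exists>I E. jsets I E"
proof -
  obtain I E where "I \<noteq> {}" "open I" "connected I" "E \<noteq> {}" "open E" "connected E"
    "bounded I" "\<not> bounded E" "I \<inter> E = {}" "I \<union> E = - path_image g"
    "frontier I = path_image g" "frontier E = path_image g"
    using Jordan_curve[OF simple loop] by metis
  then show ?thesis unfolding jsets_def path_image_g by blast
qed

lemma conn_in:
  assumes "jsets I E" "connected C" "C \<inter> range g = {}"
  shows "C \<subseteq> I \<or> C \<subseteq> E"
proof -
  have "C \<subseteq> I \<union> E" using assms unfolding jsets_def by auto
  moreover have "I \<inter> E \<inter> C = {}" using assms unfolding jsets_def by auto
  ultimately have "I \<inter> C = {} \<or> E \<inter> C = {}"
    using connectedD[OF assms(2), of I E] assms(1) unfolding jsets_def by auto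
  then show ?thesis using \<open>C \<subseteq> I \<union> E\<close> by auto
qed

lemma ray_out:
  assumes J: "jsets I E" and d: "d = 1 \<or> d = -1"
    and far: "\<And>t s. 0 \<le> s \<Longrightarrow> g t \<noteq> w + \<i> * complex_of_real (d * s)"
  shows "w \<in> E"
proof -
  define R where "R = (\<lambda>s. w + \<i> * complex_of_real (d * s)) ` {0..}"
  have "connected R" unfolding R_def
    by (intro connected_continuous_image continuous_intros) auto
  moreover have "R \<inter> range g = {}" unfolding R_def using far by force
  ultimately have RIE: "R \<subseteq> I \<or> R \<subseteq> E" using conn_in[OF J] by blast
  have wR: "w \<in> R" unfolding R_def by (rule image_eqI[of _ _ 0]) auto
  moreover have "\<not> bounded R"
  proof
    assume "bounded R"
    then obtain B where B: "\<forall>x\<in>R. norm x \<le> B" unfolding bounded_iff by blast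
    define s where "s = B + norm w + 1"
    have "norm w \<le> B" using B wR by blast
    then have s0: "s \<ge> 0" unfolding s_def using norm_ge_zero[of w] by linarith
    have "w + \<i> * complex_of_real (d * s) \<in> R" unfolding R_def using s0 by auto
    then have "norm (w + \<i> * complex_of_real (d * s)) \<le> B" using B by blast
    moreover have "norm (\<i> * complex_of_real (d * s)) - norm w \<le> norm (w + \<i> * complex_of_real (d * s))"
      using norm_diff_ineq[of "\<i> * complex_of_real (d * s)" w] by (simp add: add.commute)
    moreover have "norm (\<i> * complex_of_real (d * s)) = s" using d s0 by (auto simp: norm_mult)
    ultimately show False unfolding s_def by linarith
  qed
  ultimately have "R \<subseteq> E" using RIE J unfolding jsets_def by (metis bounded_subset)
  then show ?thesis using wR by auto
qed

lemma below_out: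
  assumes J: "jsets I E" and "\<And>t. Im (g t) > Im w"
  shows "w \<in> E"
proof (rule ray_out[OF J, of "-1"])
  fix t s :: real assume "0 \<le> s"
  then show "g t \<noteq> w + \<i> * complex_of_real (- 1 * s)" using assms(2)[of t] by auto
qed simp

lemma above_out:
  assumes J: "jsets I E" and "\<And>t. Im (g t) < Im w"
  shows "w \<in> E"
proof (rule ray_out[OF J, of "1"])
  fix t s :: real assume "0 \<le> s"
  then show "g t \<noteq> w + \<i> * complex_of_real (1 * s)" using assms(2)[of t] by auto
qed simp

end



lemma pair_bounds:
  fixes s t :: real
  shows "\<bar>s\<bar> \<le> norm (s,t)" "\<bar>t\<bar> \<le> norm (s,t)"
  using norm_fst_le[of s t] norm_snd_le[of t s] by auto

context jcurve begin

lemma Im_nonconst: "\<exists>t. Im (g t) \<noteq> Im (g 0)"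
proof (rule ccontr)
  assume "\<not> ?thesis"
  then have cI: "\<And>t. Im (g t) = Im (g 0)" by auto
  define f where "f t = Re (g t)" for t
  have fc: "\<And>x. isCont f x" unfolding f_def by (rule isCont_Re)
  have f1: "f 1 = f 0" unfolding f_def using per[of 0] by simp
  have "f (1/2) \<noteq> f 0"
  proof
    assume "f (1/2) = f 0"
    then have "g (1/2) = g 0" using cI[of "1/2"] unfolding f_def by (simp add: complex_eq_iff)
    then show False using inj_onD[OF inj, of "1/2" 0] by auto
  qed
  define c where "c = (f 0 + f (1/2)) / 2"
  have c1: "c \<noteq> f 0" "c \<noteq> f (1/2)" using \<open>f (1/2) \<noteq> f 0\<close> unfolding c_def by auto
  have p1: "(f 0 - c) * (f (1/2) - c) \<le> 0"
  proof -
    have "(f 0 - c) * (f (1/2) - c) = - ((f 0 - f (1/2))^2 / 4)" unfolding c_def by (simp add: field_simps power2_eq_square)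
    then show ?thesis by simp
  qed
  obtain t1 where t1: "0 \<le> t1" "t1 \<le> 1/2" "f t1 = c" using IVT_prod[of 0 "1/2" f c] p1 fc by auto
  have p2: "(f (1/2) - c) * (f 1 - c) \<le> 0" using p1 f1 by (simp add: mult.commute)
  obtain t2 where t2: "1/2 \<le> t2" "t2 \<le> 1" "f t2 = c" using IVT_prod[of "1/2" 1 f c] p2 fc by auto
  have "t1 < 1/2" using t1 c1 by (metis order_le_less)
  moreover have "t2 > 1/2" "t2 < 1" using t2 c1 f1 by (metis order_le_less)+
  moreover have "g t1 = g t2" using t1(3) t2(3) cI[of t1] cI[of t2] unfolding f_def by (simp add: complex_eq_iff)
  ultimately show False using inj_onD[OF inj, of t1 t2] t1 by auto
qed

end



lemma pair_dist:
  fixes xa ya xb yb :: real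
  shows "\<bar>xa - xb\<bar> \<le> dist (xa,ya) (xb,yb)" "\<bar>ya - yb\<bar> \<le> dist (xa,ya) (xb,yb)"
  using dist_fst_le[of "(xa,ya)" "(xb,yb)"] dist_snd_le[of "(xa,ya)" "(xb,yb)"] by (auto simp: dist_real_def)

lemma apex_same: "apex w w = w"
  unfolding apex_def by (simp add: complex_eq_iff)

context jcurve begin

lemma main_norm:
  "\<exists>m r. r > 0 \<and> m - complex_of_real r \<in> range g \<and> m + complex_of_real r \<in> range g \<and>
     m + \<i> * complex_of_real r \<in> range g"
proof (rule ccontr)
  assume nosol: "\<not> ?thesis"
  have sol: False if w: "w1 \<in> range g" "w2 \<in> range g" "Im w1 = Im w2" "w1 \<noteq> w2" "apex w1 w2 \<in> range g" for w1 w2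
  proof -
    define m where "m = (w1 + w2)/2"
    define r where "r = \<bar>Re w1 - Re w2\<bar>/2"
    have "Re w1 \<noteq> Re w2" using w(3,4) by (auto simp: complex_eq_iff)
    then have r: "r > 0" unfolding r_def by auto
    have ap: "apex w1 w2 = m + \<i> * complex_of_real r" unfolding apex_def m_def r_def by simp
    have "(m - complex_of_real r = w1 \<and> m + complex_of_real r = w2) \<or> (m - complex_of_real r = w2 \<and> m + complex_of_real r = w1)"
    proof (cases "Re w1 \<le> Re w2")
      case True
      then show ?thesis using w(3) unfolding m_def r_def by (auto simp: complex_eq_iff field_simps)
    next
      case False
      then show ?thesis using w(3) unfolding m_def r_def by (auto simp: complex_eq_iff field_simps)
    qed
    then show False using nosol r w ap by metis
  qed
  obtain I E where J: "jsets I E" using jordan_ex by blast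
  have all01: "\<exists>t'\<in>{0..1}. g t' = g t" for t using shift_rep[of 0 t] by auto
  have cIm: "continuous_on S (\<lambda>t. Im (g t))" for S by (simp add: continuous_at_imp_continuous_on isCont_Im)
  obtain tmin where tmin: "\<And>t. Im (g tmin) \<le> Im (g t)"
  proof -
    obtain t0 where t0: "t0 \<in> {0..1}" "\<forall>t\<in>{0..1}. Im (g t0) \<le> Im (g t)"
      using continuous_attains_inf[of "{0..1::real}" "\<lambda>t. Im (g t)"] cIm by auto
    have "Im (g t0) \<le> Im (g t)" for t using all01[of t] t0 by metis
    then show thesis using that by blast
  qed
  obtain tmax where tmax: "\<And>t. Im (g t) \<le> Im (g tmax)"
  proof -
    obtain t0 where t0: "t0 \<in> {0..1}" "\<forall>t\<in>{0..1}. Im (g t) \<le> Im (g t0)"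
      using continuous_attains_sup[of "{0..1::real}" "\<lambda>t. Im (g t)"] cIm by auto
    have "Im (g t) \<le> Im (g t0)" for t using all01[of t] t0 by metis
    then show thesis using that by blast
  qed
  define ymin where "ymin = Im (g tmin)"
  define ymax where "ymax = Im (g tmax)"
  have ylt: "ymin < ymax"
  proof -
    obtain t where "Im (g t) \<noteq> Im (g 0)" using Im_nonconst by blast
    then show ?thesis unfolding ymin_def ymax_def using tmin[of t] tmax[of t] tmin[of 0] tmax[of 0] by linarith
  qed
  define \<tau>0 where "\<tau>0 = tmax"
  define Smin where "Smin = {\<tau>0..\<tau>0+1} \<inter> (\<lambda>t. Im (g t)) -` {ymin}"
  have cSmin: "compact Smin" unfolding Smin_def
    using compact_Int_closed[OF compact_Icc continuous_closed_preimage[OF cIm[of UNIV] closed_UNIV closed_singleton]] by simp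
  have neSmin: "Smin \<noteq> {}"
  proof -
    obtain t' where "\<tau>0 \<le> t'" "t' < \<tau>0 + 1" "g t' = g tmin" using shift_rep by blast
    then have "t' \<in> Smin" unfolding Smin_def ymin_def by auto
    then show ?thesis by auto
  qed
  obtain \<sigma> where \<sigma>: "\<sigma> \<in> Smin" "\<And>t. t \<in> Smin \<Longrightarrow> t \<le> \<sigma>"
    using compact_attains_sup[OF cSmin neSmin] by blast
  have \<sigma>1: "\<tau>0 \<le> \<sigma>" "\<sigma> \<le> \<tau>0 + 1" "Im (g \<sigma>) = ymin" using \<sigma>(1) unfolding Smin_def by auto
  have gt1: "g (\<tau>0 + 1) = g \<tau>0" by (rule per)
  have \<sigma>2: "\<tau>0 < \<sigma>" "\<sigma> < \<tau>0 + 1"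
    using \<sigma>1 ylt gt1 unfolding ymax_def \<tau>0_def by (auto simp: order_le_less) 
  define Smax where "Smax = {\<sigma>..\<tau>0+1} \<inter> (\<lambda>t. Im (g t)) -` {ymax}"
  have cSmax: "compact Smax" unfolding Smax_def
    using compact_Int_closed[OF compact_Icc continuous_closed_preimage[OF cIm[of UNIV] closed_UNIV closed_singleton]] by simp
  have "\<tau>0 + 1 \<in> Smax" unfolding Smax_def ymax_def \<tau>0_def using \<sigma>2 gt1 \<tau>0_def by auto
  then have neSmax: "Smax \<noteq> {}" by auto
  obtain \<mu> where \<mu>: "\<mu> \<in> Smax" "\<And>t. t \<in> Smax \<Longrightarrow> \<mu> \<le> t"
    using compact_attains_inf[OF cSmax neSmax] by blast
  have \<mu>1: "\<sigma> \<le> \<mu>" "\<mu> \<le> \<tau>0 + 1" "Im (g \<mu>) = ymax" using \<mu>(1) unfolding Smax_def by auto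
  have \<mu>2: "\<sigma> < \<mu>" using \<mu>1 \<sigma>1 ylt by (auto simp: order_le_less)
  define L1 where "L1 = \<mu> - \<sigma>"
  define L2 where "L2 = \<sigma> - \<mu> + 1"
  have L: "L1 > 0" "L2 > 0" "L1 \<le> 1" "L2 \<le> 1" "L1 + L2 = 1"
    unfolding L1_def L2_def using \<mu>1 \<mu>2 \<sigma>2 by auto
  define a where "a s = g (\<sigma> + s * L1)" for s
  define b where "b t = g (\<sigma> - t * L2)" for t
  have a0: "a 0 = g \<sigma>" and a1: "a 1 = g \<mu>" unfolding a_def L1_def by auto
  have b0: "b 0 = g \<sigma>" and b1: "b 1 = g \<mu>" unfolding b_def L2_def using per[of "\<mu> - 1"] by auto
  have deg: "(s = 0 \<and> t = 0) \<or> (s = 1 \<and> t = 1)"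
    if st: "0 \<le> s" "s \<le> 1" "0 \<le> t" "t \<le> 1" "a s = b t" for s t
  proof -
    have injm: "inj_on g {\<mu> - 1..<\<mu> - 1 + 1}" by (rule inj_shift)
    have pb: "\<sigma> - t * L2 \<in> {\<mu> - 1..<\<mu> - 1 + 1}"
    proof -
      have "t * L2 \<le> L2" using st L by (simp add: mult_left_le_one_le)
      moreover have "0 \<le> t * L2" using st L by simp
      ultimately have "\<mu> - 1 \<le> \<sigma> - t * L2" "\<sigma> - t * L2 < \<mu>" using \<mu>2 unfolding L2_def by linarith+
      then show ?thesis by simp
    qed
    show ?thesis
    proof (cases "s = 1")
      case True
      have "g (\<mu> - 1) = g (\<sigma> - t * L2)" using st(5) True a1 per[of "\<mu> - 1"] unfolding b_def by simp
      then have "\<mu> - 1 = \<sigma> - t * L2" using inj_onD[OF injm] pb by auto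
      then have "t * L2 = 1 * L2" using L2_def by linarith
      then have "t = 1" using L by simp
      then show ?thesis using True by simp
    next
      case False
      have "s * L1 < L1" using st False L by (simp add: mult_less_cancel_right2 order_le_less)
      moreover have "0 \<le> s * L1" using st L by simp
      ultimately have "\<mu> - 1 \<le> \<sigma> + s * L1" "\<sigma> + s * L1 < \<mu>" using \<mu>2 L L1_def L2_def by linarith+
      then have pa: "\<sigma> + s * L1 \<in> {\<mu> - 1..<\<mu> - 1 + 1}" by simp
      have "\<sigma> + s * L1 = \<sigma> - t * L2" using inj_onD[OF injm _ pa pb] st(5) unfolding a_def b_def by simp
      moreover have "s * L1 \<ge> 0" "t * L2 \<ge> 0" using st L by auto
      ultimately have "s * L1 = 0" "t * L2 = 0" by linarith+
      then show ?thesis using L by simp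
    qed
  qed
  have bot: "s = 0" if st: "0 \<le> s" "s \<le> 1" "Im (a s) = Im (b 0)" for s
  proof -
    have r: "0 \<le> s*L1" "s*L1 \<le> L1" using st L by (auto simp: mult_left_le_one_le)
    have m: "\<tau>0 \<le> \<sigma> + s*L1" "\<sigma> + s*L1 \<le> \<tau>0+1" using r \<sigma>1 \<mu>1 L1_def by linarith+
    have "\<sigma> + s * L1 \<in> Smin" unfolding Smin_def using m st(3) b0 \<sigma>1 unfolding a_def by auto
    then have "\<sigma> + s * L1 \<le> \<sigma>" by (rule \<sigma>(2))
    then show ?thesis using st L by (simp add: mult_le_0_iff)
  qed
  have top: "s = 1" if st: "0 \<le> s" "s \<le> 1" "Im (a s) = Im (b 1)" for s
  proof -
    have r: "0 \<le> s*L1" "s*L1 \<le> L1" using st L by (auto simp: mult_left_le_one_le)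
    have m: "\<sigma> \<le> \<sigma> + s*L1" "\<sigma> + s*L1 \<le> \<tau>0+1" using r \<sigma>1 \<mu>1 L1_def by linarith+
    have "\<sigma> + s * L1 \<in> Smax" unfolding Smax_def using m st(3) b1 \<mu>1 unfolding a_def by auto
    then have "\<mu> \<le> \<sigma> + s * L1" by (rule \<mu>(2))
    then have "1 * L1 \<le> s * L1" using L1_def by linarith
    then show ?thesis using st L by (simp add: mult_le_cancel_right)
  qed
  have Jd: "open I" "open E" "bounded I" "\<not> bounded E" "I \<inter> E = {}" "I \<union> E = - range g" "frontier I = range g"
    using J unfolding jsets_def by auto
  have cV: "connected ((\<lambda>p. g (fst p) + c * complex_of_real (snd p)) ` ({x0<..<x1} \<times> {y0<..<y1}))" for c x0 x1 y0 y1
  proof -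
    have "continuous_on UNIV (\<lambda>p::real\<times>real. g (fst p) + c * complex_of_real (snd p))"
      by (intro continuous_intros continuous_on_compose2[OF cont_g[of UNIV]]) auto
    then show ?thesis
      by (intro connected_continuous_image convex_connected convex_Times) (auto intro: continuous_on_subset)
  qed
  have yd\<sigma>: "Im (g' \<sigma>) = 0"
    using DERIV_local_min[OF dIm[of \<sigma>], of 1] tmin \<sigma>1 ymin_def by auto
  obtain \<delta> \<eta> \<kappa> where loc: "\<delta> > 0" "\<eta> > 0" "\<kappa> > 0"
   "\<And>\<tau> v. \<bar>\<tau> - \<sigma>\<bar> < \<delta> \<Longrightarrow> 0 < v \<Longrightarrow> v < \<eta> \<Longrightarrow> g \<tau> + \<i> * complex_of_real v \<notin> range g"
   "\<And>\<tau> v. \<bar>\<tau> - \<sigma>\<bar> < \<delta> \<Longrightarrow> 0 < v \<Longrightarrow> v < \<eta> \<Longrightarrow> g \<tau> - \<i> * complex_of_real v \<notin> range g"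
   "\<And>z. cmod (z - g \<sigma>) < \<kappa> \<Longrightarrow> z \<in> range g \<or> (\<exists>\<tau> v. \<bar>\<tau> - \<sigma>\<bar> < \<delta> \<and> 0 < v \<and> v < \<eta> \<and>
          (z = g \<tau> + \<i> * complex_of_real v \<or> z = g \<tau> - \<i> * complex_of_real v))"
   "\<And>\<tau>1 \<tau>2. \<bar>\<tau>1 - \<sigma>\<bar> < \<delta> \<Longrightarrow> \<bar>\<tau>2 - \<sigma>\<bar> < \<delta> \<Longrightarrow> Im (g \<tau>1) = Im (g \<tau>2) \<Longrightarrow> g \<tau>1 \<noteq> g \<tau>2 \<Longrightarrow>
       \<exists>\<tau> v. \<bar>\<tau> - \<sigma>\<bar> < \<delta> \<and> 0 < v \<and> v < \<eta> \<and> apex (g \<tau>1) (g \<tau>2) = g \<tau> + \<i> * complex_of_real v"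
    using local_struct[OF yd\<sigma>] by blast
  define Vp where "Vp = (\<lambda>p. g (fst p) + \<i> * complex_of_real (snd p)) ` ({\<sigma> - \<delta><..<\<sigma> + \<delta>} \<times> {0<..<\<eta>})"
  define Vm where "Vm = (\<lambda>p. g (fst p) + (-\<i>) * complex_of_real (snd p)) ` ({\<sigma> - \<delta><..<\<sigma> + \<delta>} \<times> {0<..<\<eta>})"
  have memVp: "g \<tau> + \<i> * complex_of_real v \<in> Vp" if "\<bar>\<tau> - \<sigma>\<bar> < \<delta>" "0 < v" "v < \<eta>" for \<tau> v
    unfolding Vp_def using that by (intro image_eqI[of _ _ "(\<tau>, v)"]) auto
  have memVm: "g \<tau> - \<i> * complex_of_real v \<in> Vm" if "\<bar>\<tau> - \<sigma>\<bar> < \<delta>" "0 < v" "v < \<eta>" for \<tau> v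
    unfolding Vm_def using that by (intro image_eqI[of _ _ "(\<tau>, v)"]) auto
  have VpG: "Vp \<inter> range g = {}"
  proof -
    have "x \<notin> range g" if "x \<in> Vp" for x
    proof -
      from that obtain \<tau> v where tv: "\<tau> \<in> {\<sigma> - \<delta><..<\<sigma> + \<delta>}" "v \<in> {0<..<\<eta>}" "x = g \<tau> + \<i> * complex_of_real v"
        unfolding Vp_def by auto
      then show ?thesis using loc(4)[of \<tau> v] by (auto simp: abs_less_iff)
    qed
    then show ?thesis by blast
  qed
  have VmG: "Vm \<inter> range g = {}"
  proof -
    have "x \<notin> range g" if "x \<in> Vm" for x
    proof -
      from that obtain \<tau> v where tv: "\<tau> \<in> {\<sigma> - \<delta><..<\<sigma> + \<delta>}" "v \<in> {0<..<\<eta>}" "x = g \<tau> + (-\<i>) * complex_of_real v"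
        unfolding Vm_def by auto
      then show ?thesis using loc(5)[of \<tau> v] by (auto simp: abs_less_iff)
    qed
    then show ?thesis by blast
  qed
  have VmE: "Vm \<subseteq> E"
  proof -
    have w: "g \<sigma> - \<i> * complex_of_real (\<eta>/2) \<in> Vm" using memVm[of \<sigma> "\<eta>/2"] loc by auto
    have "g \<sigma> - \<i> * complex_of_real (\<eta>/2) \<in> E"
    proof (rule below_out[OF J])
      fix t show "Im (g t) > Im (g \<sigma> - \<i> * complex_of_real (\<eta>/2))" using tmin[of t] \<sigma>1 loc(2) unfolding ymin_def by simp
    qed
    moreover have "Vm \<subseteq> I \<or> Vm \<subseteq> E" using conn_in[OF J _ VmG] cV[of "-\<i>"] unfolding Vm_def by blast
    ultimately show ?thesis using w Jd(5) by blast
  qed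
  have VpI: "Vp \<subseteq> I"
  proof -
    have "g \<sigma> \<in> closure I" using Jd(7) frontier_def by auto
    then obtain z where z: "z \<in> I" "dist z (g \<sigma>) < \<kappa>" using closure_approachable loc(3) by metis
    have "z \<notin> range g" using z(1) Jd(6) by auto
    then obtain \<tau> v where tv: "\<bar>\<tau> - \<sigma>\<bar> < \<delta>" "0 < v" "v < \<eta>" "z = g \<tau> + \<i> * complex_of_real v \<or> z = g \<tau> - \<i> * complex_of_real v"
      using loc(6)[of z] z(2) by (auto simp: dist_norm)
    have "z \<notin> Vm" using z(1) VmE Jd(5) by auto
    then have "z \<in> Vp" using tv memVp memVm by auto
    moreover have "Vp \<subseteq> I \<or> Vp \<subseteq> E" using conn_in[OF J _ VpG] cV[of "\<i>"] unfolding Vp_def by blast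
    ultimately show ?thesis using z(1) Jd(5) by blast
  qed
  define \<delta>b where "\<delta>b = min \<delta> 1"
  have nearB: "apex (a s) (b t) \<in> I"
    if st: "0 \<le> s" "s \<le> 1" "0 \<le> t" "t \<le> 1" "s < \<delta>b" "t < \<delta>b" "Im (a s) = Im (b t)" "\<not> (s = 0 \<and> t = 0)" for s t
  proof -
    have "a s \<noteq> b t" using deg[of s t] st unfolding \<delta>b_def by auto
    moreover have "\<bar>(\<sigma> + s * L1) - \<sigma>\<bar> < \<delta>" "\<bar>(\<sigma> - t * L2) - \<sigma>\<bar> < \<delta>"
    proof -
      have "s * L1 \<le> s" "t * L2 \<le> t" using st L by (auto simp: mult_left_le)
      then show "\<bar>(\<sigma> + s * L1) - \<sigma>\<bar> < \<delta>" "\<bar>(\<sigma> - t * L2) - \<sigma>\<bar> < \<delta>" using st L unfolding \<delta>b_def by auto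
    qed
    ultimately obtain \<tau> v where "\<bar>\<tau> - \<sigma>\<bar> < \<delta>" "0 < v" "v < \<eta>" "apex (a s) (b t) = g \<tau> + \<i> * complex_of_real v"
      using loc(7)[of "\<sigma> + s * L1" "\<sigma> - t * L2"] st(7) unfolding a_def b_def by blast
    then show ?thesis using memVp VpI by auto
  qed
  have yd\<mu>: "Im (g' \<mu>) = 0"
    using DERIV_local_max[OF dIm[of \<mu>], of 1] tmax \<mu>1 ymax_def by auto
  obtain \<delta>' \<eta>' \<kappa>' where loc': "\<delta>' > 0" "\<eta>' > 0" "\<kappa>' > 0"
   "\<And>\<tau> v. \<bar>\<tau> - \<mu>\<bar> < \<delta>' \<Longrightarrow> 0 < v \<Longrightarrow> v < \<eta>' \<Longrightarrow> g \<tau> + \<i> * complex_of_real v \<notin> range g"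
   "\<And>\<tau> v. \<bar>\<tau> - \<mu>\<bar> < \<delta>' \<Longrightarrow> 0 < v \<Longrightarrow> v < \<eta>' \<Longrightarrow> g \<tau> - \<i> * complex_of_real v \<notin> range g"
   "\<And>z. cmod (z - g \<mu>) < \<kappa>' \<Longrightarrow> z \<in> range g \<or> (\<exists>\<tau> v. \<bar>\<tau> - \<mu>\<bar> < \<delta>' \<and> 0 < v \<and> v < \<eta>' \<and>
          (z = g \<tau> + \<i> * complex_of_real v \<or> z = g \<tau> - \<i> * complex_of_real v))"
   "\<And>\<tau>1 \<tau>2. \<bar>\<tau>1 - \<mu>\<bar> < \<delta>' \<Longrightarrow> \<bar>\<tau>2 - \<mu>\<bar> < \<delta>' \<Longrightarrow> Im (g \<tau>1) = Im (g \<tau>2) \<Longrightarrow> g \<tau>1 \<noteq> g \<tau>2 \<Longrightarrow>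
       \<exists>\<tau> v. \<bar>\<tau> - \<mu>\<bar> < \<delta>' \<and> 0 < v \<and> v < \<eta>' \<and> apex (g \<tau>1) (g \<tau>2) = g \<tau> + \<i> * complex_of_real v"
    using local_struct[OF yd\<mu>] by blast
  define Wp where "Wp = (\<lambda>p. g (fst p) + \<i> * complex_of_real (snd p)) ` ({\<mu> - \<delta>'<..<\<mu> + \<delta>'} \<times> {0<..<\<eta>'})"
  have memWp: "g \<tau> + \<i> * complex_of_real v \<in> Wp" if "\<bar>\<tau> - \<mu>\<bar> < \<delta>'" "0 < v" "v < \<eta>'" for \<tau> v
    unfolding Wp_def using that by (intro image_eqI[of _ _ "(\<tau>, v)"]) auto
  have WpG: "Wp \<inter> range g = {}"
  proof -
    have "x \<notin> range g" if "x \<in> Wp" for x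
    proof -
      from that obtain \<tau> v where tv: "\<tau> \<in> {\<mu> - \<delta>'<..<\<mu> + \<delta>'}" "v \<in> {0<..<\<eta>'}" "x = g \<tau> + \<i> * complex_of_real v"
        unfolding Wp_def by auto
      then show ?thesis using loc'(4)[of \<tau> v] by (auto simp: abs_less_iff)
    qed
    then show ?thesis by blast
  qed
  have WpE: "Wp \<subseteq> E"
  proof -
    have w: "g \<mu> + \<i> * complex_of_real (\<eta>'/2) \<in> Wp" using memWp[of \<mu> "\<eta>'/2"] loc' by auto
    have "g \<mu> + \<i> * complex_of_real (\<eta>'/2) \<in> E"
    proof (rule above_out[OF J])
      fix t show "Im (g t) < Im (g \<mu> + \<i> * complex_of_real (\<eta>'/2))" using tmax[of t] \<mu>1 loc'(2) unfolding ymax_def by simp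
    qed
    moreover have "Wp \<subseteq> I \<or> Wp \<subseteq> E" using conn_in[OF J _ WpG] cV[of "\<i>"] unfolding Wp_def by blast
    ultimately show ?thesis using w Jd(5) by blast
  qed
  define \<delta>t where "\<delta>t = min \<delta>' 1"
  have nearT: "apex (a s) (b t) \<in> E"
    if st: "0 \<le> s" "s \<le> 1" "0 \<le> t" "t \<le> 1" "1 - s < \<delta>t" "1 - t < \<delta>t" "Im (a s) = Im (b t)" "\<not> (s = 1 \<and> t = 1)" for s t
  proof -
    have bt: "b t = g (\<sigma> - t * L2 + 1)" unfolding b_def using per[of "\<sigma> - t * L2"] by simp
    have "a s \<noteq> b t" using deg[of s t] st unfolding \<delta>t_def by auto
    moreover have "\<bar>(\<sigma> + s * L1) - \<mu>\<bar> < \<delta>'" "\<bar>(\<sigma> - t * L2 + 1) - \<mu>\<bar> < \<delta>'"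
    proof -
      have "(1 - s) * L1 \<le> 1 - s" "(1 - t) * L2 \<le> 1 - t" "0 \<le> (1 - s) * L1" "0 \<le> (1 - t) * L2"
        using st L by (auto simp: mult_left_le)
      moreover have "(\<sigma> + s * L1) - \<mu> = - ((1 - s) * L1)" "(\<sigma> - t * L2 + 1) - \<mu> = (1 - t) * L2"
        unfolding L1_def L2_def by (simp_all add: algebra_simps)
      ultimately show "\<bar>(\<sigma> + s * L1) - \<mu>\<bar> < \<delta>'" "\<bar>(\<sigma> - t * L2 + 1) - \<mu>\<bar> < \<delta>'"
        using st unfolding \<delta>t_def by auto
    qed
    ultimately obtain \<tau> v where "\<bar>\<tau> - \<mu>\<bar> < \<delta>'" "0 < v" "v < \<eta>'" "apex (a s) (b t) = g \<tau> + \<i> * complex_of_real v"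
      using loc'(7)[of "\<sigma> + s * L1" "\<sigma> - t * L2 + 1"] st(7) bt unfolding a_def by auto
    then show ?thesis using memWp WpE by auto
  qed
  define h where "h z = Im (a (fst z)) - Im (b (snd z))" for z :: "real \<times> real"
  define ap where "ap z = apex (a (fst z)) (b (snd z))" for z :: "real \<times> real"
  define Q where "Q = cbox (0::real,0::real) (1,1)"
  have Q: "z \<in> Q \<longleftrightarrow> 0 \<le> fst z \<and> fst z \<le> 1 \<and> 0 \<le> snd z \<and> snd z \<le> 1" for z
    unfolding Q_def by (cases z) (auto simp: cbox_Pair_eq)
  have ca: "continuous_on UNIV (\<lambda>z::real\<times>real. a (fst z))" unfolding a_def
    by (intro continuous_on_compose2[OF cont_g[of UNIV]] continuous_intros) auto
  have cb: "continuous_on UNIV (\<lambda>z::real\<times>real. b (snd z))" unfolding b_def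
    by (intro continuous_on_compose2[OF cont_g[of UNIV]] continuous_intros) auto
  have ch: "continuous_on UNIV h" unfolding h_def by (intro continuous_intros ca cb)
  have cap: "continuous_on UNIV ap" unfolding ap_def apex_def by (intro continuous_intros ca cb) auto
  define Z where "Z = Q \<inter> h -` {0}"
  have cZ: "closed Z" unfolding Z_def Q_def
    by (rule continuous_closed_preimage[OF continuous_on_subset[OF ch] closed_cbox closed_singleton]) auto
  define \<delta>0 where "\<delta>0 = min (min \<delta>b \<delta>t) (1/2)"
  have \<delta>0: "\<delta>0 > 0" "\<delta>0 \<le> \<delta>b" "\<delta>0 \<le> \<delta>t" "\<delta>0 \<le> 1/2"
    unfolding \<delta>0_def \<delta>b_def \<delta>t_def using loc(1) loc'(1) by auto
  define Zin where "Zin = Z \<inter> (Q \<inter> ap -` (- E)) \<inter> (- ball (1,1) \<delta>0)"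
  define Zout where "Zout = Z \<inter> (Q \<inter> ap -` (- I)) \<inter> (- ball (0,0) \<delta>0)"
  have cpE: "closed (Q \<inter> ap -` (- E))" unfolding Q_def
    by (rule continuous_closed_preimage[OF continuous_on_subset[OF cap] closed_cbox closed_Compl[OF Jd(2)]]) auto
  have cZin: "closed Zin" unfolding Zin_def
    by (rule closed_Int[OF closed_Int[OF cZ cpE] closed_Compl[OF open_ball]])
  have cpI: "closed (Q \<inter> ap -` (- I))" unfolding Q_def
    by (rule continuous_closed_preimage[OF continuous_on_subset[OF cap] closed_cbox closed_Compl[OF Jd(1)]]) auto
  have cZout: "closed Zout" unfolding Zout_def
    by (rule closed_Int[OF closed_Int[OF cZ cpI] closed_Compl[OF open_ball]])
  define Bo where "Bo = Q \<inter> snd -` {0::real}"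
  define T where "T = Q \<inter> snd -` {1::real}"
  have cBo: "closed Bo" unfolding Bo_def Q_def
    by (rule continuous_closed_preimage[OF continuous_on_snd[OF continuous_on_id] closed_cbox closed_singleton])
  have cT: "closed T" unfolding T_def Q_def
    by (rule continuous_closed_preimage[OF continuous_on_snd[OF continuous_on_id] closed_cbox closed_singleton])
  have neBo: "Bo \<noteq> {}" and neT: "T \<noteq> {}"
  proof -
    have "(0,0) \<in> Bo" "(0,1) \<in> T" unfolding Bo_def T_def using Q by auto
    then show "Bo \<noteq> {}" "T \<noteq> {}" by auto
  qed
  have EG: "x \<notin> range g" if "x \<in> E" for x using that Jd(6) by auto
  have IG: "x \<notin> range g" if "x \<in> I" for x using that Jd(6) by auto
  have noSol: False if z: "z \<in> Z" "ap z \<in> range g" "z \<noteq> (0,0)" "z \<noteq> (1,1)" for z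
  proof -
    obtain s t where zst: "z = (s,t)" by fastforce
    have st: "0 \<le> s" "s \<le> 1" "0 \<le> t" "t \<le> 1" "Im (a s) = Im (b t)"
      using z(1) zst Q unfolding Z_def h_def by auto
    have "a s \<noteq> b t" using deg[of s t] st z zst by auto
    then show False using sol[of "a s" "b t"] st z(2) zst unfolding ap_def a_def b_def by auto
  qed
  have cover: "z \<in> Zin \<or> z \<in> Zout" if z: "z \<in> Z" for z
  proof -
    obtain s t where zst: "z = (s,t)" by fastforce
    have st: "0 \<le> s" "s \<le> 1" "0 \<le> t" "t \<le> 1" "Im (a s) = Im (b t)"
      using z zst Q unfolding Z_def h_def by auto
    have zQ: "z \<in> Q" using z unfolding Z_def by auto
    have d00: "\<bar>0 - s\<bar> \<le> dist (0,0) z" "\<bar>0 - t\<bar> \<le> dist (0,0) z" using pair_dist[where xa=0 and ya=0 and xb=s and yb=t] zst by auto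
    have d11: "\<bar>1 - s\<bar> \<le> dist (1,1) z" "\<bar>1 - t\<bar> \<le> dist (1,1) z" using pair_dist[where xa=1 and ya=1 and xb=s and yb=t] zst by auto
    show ?thesis
    proof (cases "dist (0,0) z < \<delta>0")
      case True
      then have sm: "s < \<delta>b" "t < \<delta>b" "s < 1/2" using d00 \<delta>0 st by auto
      have apE: "ap z \<notin> E"
      proof (cases "s = 0 \<and> t = 0")
        case True
        then have "ap z = g \<sigma>" unfolding ap_def using zst a0 b0 apex_same by simp
        then show ?thesis using EG by auto
      next
        case False
        then have "ap z \<in> I" using nearB[of s t] st sm zst unfolding ap_def by auto
        then show ?thesis using Jd(5) by auto
      qed
      have "\<not> dist (1,1) z < \<delta>0" using d11 sm \<delta>0 by auto
      then have "z \<in> Zin" unfolding Zin_def using z zQ apE by auto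
      then show ?thesis by simp
    next
      case F0: False
      show ?thesis
      proof (cases "dist (1,1) z < \<delta>0")
        case True
        then have sm: "1 - s < \<delta>t" "1 - t < \<delta>t" "1 - s < 1/2" using d11 \<delta>0 st by auto
        have apI: "ap z \<notin> I"
        proof (cases "s = 1 \<and> t = 1")
          case True
          then have "ap z = g \<mu>" unfolding ap_def using zst a1 b1 apex_same by simp
          then show ?thesis using IG by auto
        next
          case False
          then have "ap z \<in> E" using nearT[of s t] st sm zst unfolding ap_def by auto
          then show ?thesis using Jd(5) by auto
        qed
        have "z \<in> Zout" unfolding Zout_def using z zQ apI F0 by auto
        then show ?thesis by simp
      next
        case F1: False
        have nc: "z \<noteq> (0,0)" "z \<noteq> (1,1)" using F0 F1 \<delta>0 by auto
        have "ap z \<notin> range g" using noSol[OF z _ nc] by auto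
        then have "ap z \<in> I \<or> ap z \<in> E" using Jd(6) by auto
        then show ?thesis
        proof
          assume "ap z \<in> I"
          then have "ap z \<notin> E" using Jd(5) by auto
          then show ?thesis unfolding Zin_def using z zQ F1 by auto
        next
          assume "ap z \<in> E"
          then have "ap z \<notin> I" using Jd(5) by auto
          then show ?thesis unfolding Zout_def using z zQ F0 by auto
        qed
      qed
    qed
  qed
  have disj: "Zin \<inter> Zout = {}"
  proof -
    have False if "z \<in> Zin" "z \<in> Zout" for z
    proof -
      have "ap z \<notin> I" "ap z \<notin> E" using that unfolding Zin_def Zout_def by auto
      then have "ap z \<in> range g" using Jd(6) by auto
      moreover have "z \<noteq> (0,0)" "z \<noteq> (1,1)" using that \<delta>0 unfolding Zin_def Zout_def by auto
      moreover have "z \<in> Z" using that unfolding Zin_def by auto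
      ultimately show False using noSol by blast
    qed
    then show ?thesis by blast
  qed
  have ZinT: "Zin \<inter> T = {}"
  proof -
    have False if "z \<in> Zin" "z \<in> T" for z
    proof -
      obtain s t where zst: "z = (s,t)" by fastforce
      have st: "0 \<le> s" "s \<le> 1" "t = 1" "Im (a s) = Im (b t)"
        using that zst Q unfolding Zin_def Z_def T_def h_def by auto
      then have "s = 1" using top by auto
      then show False using that zst st \<delta>0 unfolding Zin_def by auto
    qed
    then show ?thesis by blast
  qed
  have ZoutB: "Zout \<inter> Bo = {}"
  proof -
    have False if "z \<in> Zout" "z \<in> Bo" for z
    proof -
      obtain s t where zst: "z = (s,t)" by fastforce
      have st: "0 \<le> s" "s \<le> 1" "t = 0" "Im (a s) = Im (b t)"
        using that zst Q unfolding Zout_def Z_def Bo_def h_def by auto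
      then have "s = 0" using bot by auto
      then show False using that zst st \<delta>0 unfolding Zout_def by auto
    qed
    then show ?thesis by blast
  qed
  define \<phi> where "\<phi> z = infdist z (Zin \<union> Bo) - infdist z (Zout \<union> T)" for z
  have c\<phi>: "continuous_on (cbox (0,0) (1,1)) \<phi>" unfolding \<phi>_def
    by (intro continuous_on_diff continuous_on_infdist continuous_on_id)
  obtain z where z: "z \<in> cbox (0,0) (1,1)" "h z = 0" "\<phi> z = 0"
  proof -
    have "\<exists>z\<in>cbox (0,0) (1,1). h z = 0 \<and> \<phi> z = 0"
    proof (rule poincare_miranda[OF continuous_on_subset[OF ch] c\<phi>])
      fix t :: real assume "0 \<le> t" "t \<le> 1"
      show "h (0,t) \<le> 0" unfolding h_def b_def using a0 \<sigma>1 tmin unfolding ymin_def by simp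
      show "h (1,t) \<ge> 0" unfolding h_def b_def using a1 \<mu>1 tmax unfolding ymax_def by simp
    next
      fix s :: real assume s: "0 \<le> s" "s \<le> 1"
      then have "(s,0) \<in> Bo" "(s,1) \<in> T" unfolding Bo_def T_def using Q by auto
      then show "\<phi> (s,0) \<le> 0" "\<phi> (s,1) \<ge> 0" unfolding \<phi>_def by (auto simp: infdist_nonneg)
    qed auto
    then show thesis using that by blast
  qed
  have zZ: "z \<in> Z" unfolding Z_def using z Q_def by auto
  have clos: "x \<in> S" if "infdist x S = 0" "closed S" "S \<noteq> {}" for x S
    using in_closure_iff_infdist_zero[OF that(3)] that closure_closed by metis
  show False
  proof (cases "z \<in> Zin")
    case True
    then have "infdist z (Zin \<union> Bo) = 0" by simp
    then have "infdist z (Zout \<union> T) = 0" using z(3) unfolding \<phi>_def by simp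
    then have "z \<in> Zout \<union> T" using clos cZout cT neT by blast
    then show False using True disj ZinT by blast
  next
    case False
    then have zo: "z \<in> Zout" using cover[OF zZ] by blast
    then have "infdist z (Zout \<union> T) = 0" by simp
    then have "infdist z (Zin \<union> Bo) = 0" using z(3) unfolding \<phi>_def by simp
    then have "z \<in> Zin \<union> Bo" using clos cZin cBo neBo by blast
    then show False using zo False ZoutB by blast
  qed
qed

end



lemma collinear_of_Im:
  fixes A B C :: complex
  assumes "Im (cnj (B - A) * (C - A)) = 0"
  shows "collinear {A, B, C}"
proof -
  define u where "u = B - A"
  define w where "w = C - A"
  have "collinear {0, u, w}"
  proof (cases "u = 0")
    case True then show ?thesis by (simp add: collinear_2 insert_commute)
  next
    case False
    have "Im (w / u) = 0"
      using assms unfolding u_def[symmetric] w_def[symmetric]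
      by (simp add: Im_divide algebra_simps)
    then have "w = Re (w / u) *\<^sub>R u" using False
      by (metis complex_is_Real_iff nonzero_mult_div_cancel_right of_real_Re scaleR_conv_of_real mult.commute
          div_by_0 mult_eq_0_iff nonzero_eq_divide_eq)
    then show ?thesis using collinear_lemma by blast
  qed
  then have "collinear {B, A, C}" using collinear_3[of B A C] unfolding u_def w_def by simp
  then show ?thesis by (simp add: insert_commute)
qed

definition ca :: "complex \<Rightarrow> complex \<Rightarrow> complex \<Rightarrow> real" where
  "ca u w z = (Im w * Re z - Re w * Im z) / Im (cnj u * w)"
definition cb :: "complex \<Rightarrow> complex \<Rightarrow> complex \<Rightarrow> real" where
  "cb u w z = (Re u * Im z - Im u * Re z) / Im (cnj u * w)"
definition cL :: "complex \<Rightarrow> complex \<Rightarrow> complex \<Rightarrow> complex" where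
  "cL u w z = Complex (2 * ca u w z + cb u w z) (cb u w z)"

lemma ca_add: "ca u w (z1 + z2) = ca u w z1 + ca u w z2"
  unfolding ca_def by (simp add: add_divide_distrib[symmetric] algebra_simps)
lemma cb_add: "cb u w (z1 + z2) = cb u w z1 + cb u w z2"
  unfolding cb_def by (simp add: add_divide_distrib[symmetric] algebra_simps)
lemma ca_scale: "ca u w (r *\<^sub>R z) = r * ca u w z"
  unfolding ca_def by (simp add: algebra_simps)
lemma cb_scale: "cb u w (r *\<^sub>R z) = r * cb u w z"
  unfolding cb_def by (simp add: algebra_simps)

lemma real_id1:
  assumes "(a::real)*q - b*p \<noteq> 0"
  shows "x = (q*x - p*y)/(a*q - b*p) * a + (a*y - b*x)/(a*q - b*p) * p"
proof -
  have "(q*x - p*y)/(a*q - b*p) * a + (a*y - b*x)/(a*q - b*p) * p = ((q*x - p*y) * a + (a*y - b*x) * p)/(a*q - b*p)"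
    by (simp add: add_divide_distrib times_divide_eq_left)
  also have "(q*x - p*y) * a + (a*y - b*x) * p = x * (a*q - b*p)" by (simp add: algebra_simps)
  finally show ?thesis using assms by simp
qed
lemma real_id2:
  assumes "(a::real)*q - b*p \<noteq> 0"
  shows "y = (q*x - p*y)/(a*q - b*p) * b + (a*y - b*x)/(a*q - b*p) * q"
proof -
  have "(q*x - p*y)/(a*q - b*p) * b + (a*y - b*x)/(a*q - b*p) * q = ((q*x - p*y) * b + (a*y - b*x) * q)/(a*q - b*p)"
    by (simp add: add_divide_distrib times_divide_eq_left)
  also have "(q*x - p*y) * b + (a*y - b*x) * q = y * (a*q - b*p)" by (simp add: algebra_simps)
  finally show ?thesis using assms by simp
qed

lemma decomp:
  assumes "Im (cnj u * w) \<noteq> 0"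
  shows "z = complex_of_real (ca u w z) * u + complex_of_real (cb u w z) * w"
proof -
  have d: "Im (cnj u * w) = Re u * Im w - Im u * Re w" by simp
  show ?thesis unfolding complex_eq_iff ca_def cb_def d
    using real_id1[of "Re u" "Im w" "Im u" "Re w" "Re z" "Im z"] real_id2[of "Re u" "Im w" "Im u" "Re w" "Im z" "Re z"] assms d
    by simp
qed

lemma decomp_L:
  assumes "Im (cnj u * w) \<noteq> 0"
  shows "z = complex_of_real ((Re (cL u w z) - Im (cL u w z)) / 2) * u + complex_of_real (Im (cL u w z)) * w"
proof -
  have "(Re (cL u w z) - Im (cL u w z)) / 2 = ca u w z" "Im (cL u w z) = cb u w z" unfolding cL_def by auto
  then show ?thesis using decomp[OF assms] by simp
qed

lemma cL_linear: "linear (cL u w)"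
  by (rule linearI) (simp_all add: cL_def ca_add cb_add ca_scale cb_scale complex_eq_iff algebra_simps)


theorem mainTheorem1:
  fixes \<Gamma> :: "complex set" and A B C :: complex
  assumes "jordan_C1_curve \<Gamma>"
    and "\<not> collinear {A, B, C}"
  shows "\<exists>v c r. r > 0 \<and>
           homothety c r (translation v A) \<in> \<Gamma> \<and>
           homothety c r (translation v B) \<in> \<Gamma> \<and>
           homothety c r (translation v C) \<in> \<Gamma>"
proof -
  obtain \<gamma> where \<gamma>: "\<gamma> C1_differentiable_on UNIV" "\<forall>t. vector_derivative \<gamma> (at t) \<noteq> 0"
    "\<forall>t. \<gamma> (t + 1) = \<gamma> t" "inj_on \<gamma> {0..<1}" "\<Gamma> = \<gamma> ` {0..1}"
    using assms(1) unfolding jordan_C1_curve_def by blast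
  obtain D where D: "\<And>t. (\<gamma> has_vector_derivative D t) (at t)" "continuous_on UNIV D"
    using \<gamma>(1) unfolding C1_differentiable_on_def by blast
  have Dnz: "D t \<noteq> 0" for t using \<gamma>(2) vector_derivative_at[OF D(1)] by metis
  define u where "u = B - A"
  define w where "w = C - A"
  have Dt: "Im (cnj u * w) \<noteq> 0" using assms(2) collinear_of_Im unfolding u_def w_def by blast
  define L where "L = cL u w"
  have linL: "linear L" unfolding L_def by (rule cL_linear)
  have blL: "bounded_linear L" using linL linear_conv_bounded_linear by blast
  have Linj: "z = 0" if "L z = 0" for z
    using decomp_L[OF Dt, of z] that unfolding L_def by simp
  have Ldiff: "L (x - y) = L x - L y" for x y using linear_diff[OF linL] .
  define g where "g t = L (\<gamma> t - A) - 1" for t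
  define g' where "g' t = L (D t)" for t
  interpret jc: jcurve g g'
  proof
    fix t
    have "((\<lambda>t. \<gamma> t - A) has_vector_derivative D t) (at t)" using D(1)[of t] by (auto intro!: derivative_eq_intros)
    then have "((\<lambda>t. L (\<gamma> t - A)) has_vector_derivative L (D t)) (at t)" by (rule bounded_linear.has_vector_derivative[OF blL])
    then show "(g has_vector_derivative g' t) (at t)" unfolding g_def g'_def by (auto intro!: derivative_eq_intros)
  next
    show "continuous_on UNIV g'" unfolding g'_def
      by (rule continuous_on_compose2[OF linear_continuous_on[OF blL] D(2)]) auto
  next
    fix t show "g' t \<noteq> 0" using Linj Dnz unfolding g'_def by blast
  next
    fix t show "g (t + 1) = g t" using \<gamma>(3) unfolding g_def by simp
  next
    show "inj_on g {0..<1}"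
    proof (rule inj_onI)
      fix x y assume "x \<in> {0..<1}" "y \<in> {0..<1}" "g x = g y"
      then have "L ((\<gamma> x - A) - (\<gamma> y - A)) = 0" unfolding g_def Ldiff by simp
      then have "(\<gamma> x - A) - (\<gamma> y - A) = 0" by (rule Linj)
      then have "\<gamma> x = \<gamma> y" by simp
      then show "x = y" using \<gamma>(4) \<open>x \<in> {0..<1}\<close> \<open>y \<in> {0..<1}\<close> by (meson inj_onD)
    qed
  qed
  obtain m r where mr: "r > 0" "m - complex_of_real r \<in> range g" "m + complex_of_real r \<in> range g"
    "m + \<i> * complex_of_real r \<in> range g" using jc.main_norm by blast
  have rg0: "range g = g ` {0..1}" using jc.range_eq[of 0] by simp
  have rg: "range g = (\<lambda>z. L (z - A) - 1) ` \<Gamma>" unfolding rg0 \<gamma>(5) image_image g_def by simp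
  obtain PA where PA0: "PA \<in> \<Gamma>" "m - complex_of_real r = L (PA - A) - 1" using mr(2) unfolding rg by blast
  then have PA: "PA \<in> \<Gamma>" "L (PA - A) = m - complex_of_real r + 1" using PA0 by (auto simp: eq_diff_eq)
  obtain PB where PB0: "PB \<in> \<Gamma>" "m + complex_of_real r = L (PB - A) - 1" using mr(3) unfolding rg by blast
  then have PB: "PB \<in> \<Gamma>" "L (PB - A) = m + complex_of_real r + 1" using PB0 by (auto simp: eq_diff_eq)
  obtain PC where PC0: "PC \<in> \<Gamma>" "m + \<i> * complex_of_real r = L (PC - A) - 1" using mr(4) unfolding rg by blast
  then have PC: "PC \<in> \<Gamma>" "L (PC - A) = m + \<i> * complex_of_real r + 1" using PC0 by (auto simp: eq_diff_eq)
  have eA: "PA - A = complex_of_real ((Re m - r + 1 - Im m) / 2) * u + complex_of_real (Im m) * w"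
    using decomp_L[OF Dt, of "PA - A"] PA(2) unfolding L_def by simp
  have eB: "PB - A = complex_of_real ((Re m + r + 1 - Im m) / 2) * u + complex_of_real (Im m) * w"
    using decomp_L[OF Dt, of "PB - A"] PB(2) unfolding L_def by simp
  have eC: "PC - A = complex_of_real ((Re m - r + 1 - Im m) / 2) * u + complex_of_real (Im m + r) * w"
    using decomp_L[OF Dt, of "PC - A"] PC(2) unfolding L_def by (simp add: algebra_simps)
  define c0 where "c0 = PA - complex_of_real r * A"
  have hA: "PA = c0 + complex_of_real r * A" unfolding c0_def by simp
  have hB: "PB = c0 + complex_of_real r * B"
  proof -
    have "PB - PA = (PB - A) - (PA - A)" by simp
    also have "\<dots> = complex_of_real r * u" unfolding eA eB
      by (simp add: algebra_simps flip: of_real_diff of_real_mult) (simp add: field_simps)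
    finally show ?thesis unfolding c0_def u_def by (simp add: algebra_simps)
  qed
  have hC: "PC = c0 + complex_of_real r * C"
  proof -
    have "PC - PA = (PC - A) - (PA - A)" by simp
    also have "\<dots> = complex_of_real r * w" unfolding eA eC
      by (simp add: algebra_simps)
    finally show ?thesis unfolding c0_def w_def by (simp add: algebra_simps)
  qed
  have hom: "homothety 0 r (translation (c0 / complex_of_real r) X) = c0 + complex_of_real r * X" for X
    unfolding homothety_def translation_def using mr(1) by (simp add: algebra_simps)
  show ?thesis
    using mr(1) PA(1) PB(1) PC(1) hA hB hC hom by metis
qed


end
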